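(* In the setting below, for every $x\in\mathbb{R}^2$, $n\ge1$, $r\ge1$, the residual tail dependence coefficient $\eta^{(Y,r)}_{(x)}$ of $(Y_n(x),Y_{n+r}(x))$ equals $$\eta^{(Y,r)}_{(x)}=\begin{cases}\max(1/2,\alpha(x)),& \alpha(x)<1\text{ and } r=1,\\ 1,&\alpha(x)\ge1\text{ and } r=1,\\ 1/2,&\text{otherwise (i.e. } r\ge2).\end{cases}$$
   Context: Setting: $\{\widehat X_n(x):x\in\mathbb{R}^2\}_{n\ge0}$ is an i.i.d. sequence of random fields whose variables $\widehat X_n(x)$ are all mutually independent with standard Fréchet distribution ($P(\cdot\le z)=e^{-1/z}$, $z>0$); $X_n(x)=\tfrac23\widehat X_n(x)\vee\tfrac13\widehat X_{n-1}(x)$; $\{Z_n\}_{n\ge1}$ are i.i.d. standard Fréchet, independent of $\{\widehat X_n\}$; $\alpha:\mathbb{R}^2\to(0,\infty)$; $Y_n(x)=X_n(x)\vee Z_n^{1/\alpha(x)}$. The residual (Ledford–Tawn) tail dependence coefficient of $(Y_n(x),Y_{n+r}(x))$ is the number $\eta\in(0,1]$ such that $P(Y_{n+r}(x)>y,Y_n(x)>y)\sim P(Y_n(x)>y)^{1/\eta}\mathcal{L}(y)$ as $y\to\infty$ for some slowly varying function $\mathcal{L}$ (i.e. $\mathcal{L}(ty)/\mathcal{L}(y)\to1$ for all $t>0$). *)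

theory Defs
  imports "HOL-Probability.Probability" "HOL-Library.Landau_Symbols"
begin

definition std_frechet :: "'a measure \<Rightarrow> ('a \<Rightarrow> real) \<Rightarrow> bool" where
  "std_frechet M X \<longleftrightarrow> X \<in> borel_measurable M \<and>
     (\<forall>z>0. measure M {\<omega> \<in> space M. X \<omega> \<le> z} = exp (- 1 / z))"

definition slowly_varying :: "(real \<Rightarrow> real) \<Rightarrow> bool" where
  "slowly_varying L \<longleftrightarrow> (\<forall>t>0. ((\<lambda>y. L (t * y) / L y) \<longlongrightarrow> 1) at_top)"

definition residual_tdc :: "'a measure \<Rightarrow> ('a \<Rightarrow> real) \<Rightarrow> ('a \<Rightarrow> real) \<Rightarrow> real \<Rightarrow> bool" where
  "residual_tdc M U V \<eta> \<longleftrightarrow> 0 < \<eta> \<and> \<eta> \<le> 1 \<and>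
     (\<exists>L. slowly_varying L \<and>
        (\<lambda>y. measure M {\<omega> \<in> space M. V \<omega> > y \<and> U \<omega> > y})
          \<sim>[at_top] (\<lambda>y. measure M {\<omega> \<in> space M. U \<omega> > y} powr (1 / \<eta>) * L y))"

definition Xfield :: "(nat \<Rightarrow> real^2 \<Rightarrow> 'a \<Rightarrow> real) \<Rightarrow> nat \<Rightarrow> real^2 \<Rightarrow> 'a \<Rightarrow> real" where
  "Xfield Xh n x \<omega> = max (2/3 * Xh n x \<omega>) (1/3 * Xh (n - 1) x \<omega>)"

definition Yfield :: "(nat \<Rightarrow> real^2 \<Rightarrow> 'a \<Rightarrow> real) \<Rightarrow> (nat \<Rightarrow> 'a \<Rightarrow> real) \<Rightarrow> (real^2 \<Rightarrow> real)
    \<Rightarrow> nat \<Rightarrow> real^2 \<Rightarrow> 'a \<Rightarrow> real" where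
  "Yfield Xh Z \<alpha> n x \<omega> = max (Xfield Xh n x \<omega>) (Z n \<omega> powr (1 / \<alpha> x))"

definition joint_family :: "(nat \<Rightarrow> real^2 \<Rightarrow> 'a \<Rightarrow> real) \<Rightarrow> (nat \<Rightarrow> 'a \<Rightarrow> real)
    \<Rightarrow> (nat \<times> (real^2)) + nat \<Rightarrow> 'a \<Rightarrow> real" where
  "joint_family Xh Z i = (case i of Inl (n, x) \<Rightarrow> Xh n x | Inr n \<Rightarrow> Z n)"

end

theory Submission
  imports Defs "HOL-Real_Asymp.Real_Asymp"
begin


definition uu :: "real \<Rightarrow> real \<Rightarrow> real" where "uu a y = 1/y + y powr -a"
definition pp :: "real \<Rightarrow> real \<Rightarrow> real" where "pp a y = 1 - exp (- uu a y)"
definition DD :: "real \<Rightarrow> real \<Rightarrow> real" where "DD a y = exp (-2 * uu a y) * (exp (1/(3*y)) - 1)"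

lemma uu_pos: "y > 0 \<Longrightarrow> uu a y > 0"
  unfolding uu_def by (simp add: add_pos_nonneg)

lemma pp_pos: "y > 0 \<Longrightarrow> pp a y > 0"
  unfolding pp_def using uu_pos[of y a] by simp

lemma uu_lim: "a > 0 \<Longrightarrow> (uu a \<longlongrightarrow> 0) at_top"
proof -
  assume a: "a > 0"
  have "((\<lambda>y::real. 1/y) \<longlongrightarrow> 0) at_top" by real_asymp
  moreover have "((\<lambda>y::real. y powr -a) \<longlongrightarrow> 0) at_top"
    using a by (intro tendsto_neg_powr filterlim_ident) auto
  ultimately show ?thesis unfolding uu_def[abs_def] using tendsto_add by fastforce
qed

lemma uu_at_right: "a > 0 \<Longrightarrow> filterlim (uu a) (at_right 0) at_top"
proof -
  assume a: "a > 0"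
  have "eventually (\<lambda>y. uu a y > 0) at_top"
    using eventually_gt_at_top[of "0::real"] by (rule eventually_mono) (rule uu_pos)
  then show ?thesis by (rule tendsto_imp_filterlim_at_right[OF uu_lim[OF a]])
qed

lemma pu_lim: "a > 0 \<Longrightarrow> ((\<lambda>y. pp a y / uu a y) \<longlongrightarrow> 1) at_top"
proof -
  assume a: "a > 0"
  have g: "((\<lambda>v::real. (1 - exp (-v)) / v) \<longlongrightarrow> 1) (at_right 0)" by real_asymp
  have "((\<lambda>y. (\<lambda>v::real. (1 - exp (-v)) / v) (uu a y)) \<longlongrightarrow> 1) at_top"
    by (rule filterlim_compose[OF g uu_at_right[OF a]])
  then show ?thesis by (simp add: pp_def)
qed

lemma up_lim: "a > 0 \<Longrightarrow> ((\<lambda>y. uu a y / pp a y) \<longlongrightarrow> 1) at_top"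
proof -
  assume a: "a > 0"
  have "((\<lambda>y. inverse (pp a y / uu a y)) \<longlongrightarrow> inverse 1) at_top"
    by (rule tendsto_inverse[OF pu_lim[OF a]]) simp
  then show ?thesis by simp
qed

lemma DD_lim: "a > 0 \<Longrightarrow> ((\<lambda>y. DD a y * y) \<longlongrightarrow> 1/3) at_top"
proof -
  assume a: "a > 0"
  have e: "((\<lambda>y. exp (-2 * uu a y)) \<longlongrightarrow> exp (-2 * 0)) at_top"
    by (intro tendsto_intros uu_lim a)
  have f: "((\<lambda>y::real. (exp (1/(3*y)) - 1) * y) \<longlongrightarrow> 1/3) at_top" by real_asymp
  have "((\<lambda>y. exp (-2 * uu a y) * ((exp (1/(3*y)) - 1) * y)) \<longlongrightarrow> exp (-2 * 0) * (1/3)) at_top"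
    by (rule tendsto_mult[OF e f])
  then show ?thesis by (simp add: DD_def mult.assoc)
qed

lemma ypow: fixes y b :: real shows "y > 0 \<Longrightarrow> y * y powr b = y powr (1 + b)"
proof -
  assume "y > 0"
  have "y powr (1+b) = y powr 1 * y powr b" by (rule powr_add)
  thus ?thesis using \<open>y>0\<close> by simp
qed
lemma trip: fixes y b c :: real shows "y > 0 \<Longrightarrow> y * (y powr b * y powr c) = y powr (1 + (b + c))"
  by (simp only: powr_add[symmetric] ypow)
lemma e4: fixes y a :: real shows "y > 0 \<Longrightarrow> y powr (1 - 2*a) = y * (y powr -a * y powr -a)"
proof -
  assume y: "y > 0"
  have "1 - 2*a = 1 + (-a + -a)" by simp
  then show ?thesis using trip[OF y, of "-a" "-a"] by simp
qed
lemma e5: fixes y a :: real shows "y > 0 \<Longrightarrow> y powr (2*a - 1) = 1 / (y * (y powr -a * y powr -a))"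
proof -
  assume y: "y > 0"
  have "y powr (2*a - 1) * y powr (1 + (-a + -a)) = y powr ((2*a - 1) + (1 + (-a + -a)))"
    by (rule powr_add[symmetric])
  also have "\<dots> = 1" using y by simp
  finally show ?thesis using y trip[OF y, of "-a" "-a"] by (simp add: field_simps)
qed
lemma e7: fixes y a :: real shows "y > 0 \<Longrightarrow> 1/y = y powr -a * y powr (a - 1)"
proof -
  assume y: "y > 0"
  have "y * (y powr -a * y powr (a - 1)) = y powr (1 + (-a + (a - 1)))"
    using y by (rule trip)
  also have "\<dots> = 1" using y by simp
  finally show ?thesis using y by (simp add: field_simps)
qed

lemma inv_lim: "((\<lambda>y::real. 1/y) \<longlongrightarrow> 0) at_top" by real_asymp

lemma L4: "a > 1/2 \<Longrightarrow> ((\<lambda>y. (uu a y)^2 * y) \<longlongrightarrow> 0) at_top"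
proof -
  assume a: "a > 1/2"
  have h: "((\<lambda>y::real. 2 * (1/y) + 2 * y powr (1 - 2*a)) \<longlongrightarrow> 2 * 0 + 2 * 0) at_top"
    using a by (intro tendsto_intros tendsto_neg_powr filterlim_ident) (auto intro: inv_lim)
  show ?thesis
  proof (rule tendsto_sandwich[of "\<lambda>_. 0" _ _ "\<lambda>y::real. 2 * (1/y) + 2 * y powr (1 - 2*a)"])
    show "\<forall>\<^sub>F y in at_top. 0 \<le> (uu a y)^2 * y"
      using eventually_gt_at_top[of "0::real"] by eventually_elim simp
    show "\<forall>\<^sub>F y in at_top. (uu a y)^2 * y \<le> 2 * (1/y) + 2 * y powr (1 - 2*a)"
      using eventually_gt_at_top[of "0::real"]
    proof eventually_elim
      case (elim y)
      have e: "y powr (1 - 2*a) = y * (y powr -a * y powr -a)"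
        using elim by (rule e4)
      have "(uu a y)^2 * y = (1/y + y powr -a)^2 * y" by (simp add: uu_def)
      also have "\<dots> \<le> 2 * ((1/y)^2 + (y powr -a)^2) * y"
      proof (rule mult_right_mono)
        have "0 \<le> (1/y - y powr -a)^2" by simp
        then show "(1/y + y powr -a)^2 \<le> 2 * ((1/y)^2 + (y powr -a)^2)"
          by (simp add: power2_eq_square algebra_simps)
      qed (use elim in auto)
      also have "\<dots> = 2 * (1/y) + 2 * y powr (1 - 2*a)"
        using elim unfolding e by (simp add: power2_eq_square field_simps)
      finally show ?case .
    qed
  qed (use h in auto)
qed

lemma L5: "0 < a \<Longrightarrow> a < 1/2 \<Longrightarrow> ((\<lambda>y. 1 / (y * (uu a y)^2)) \<longlongrightarrow> 0) at_top"
proof -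
  assume a: "0 < a" "a < 1/2"
  have h: "((\<lambda>y::real. y powr (2*a - 1)) \<longlongrightarrow> 0) at_top"
    using a by (intro tendsto_neg_powr filterlim_ident) auto
  show ?thesis
  proof (rule tendsto_sandwich[of "\<lambda>_. 0" _ _ "\<lambda>y::real. y powr (2*a - 1)"])
    show "\<forall>\<^sub>F y in at_top. 0 \<le> 1 / (y * (uu a y)^2)"
      using eventually_gt_at_top[of "0::real"] by eventually_elim simp
    show "\<forall>\<^sub>F y in at_top. 1 / (y * (uu a y)^2) \<le> y powr (2*a - 1)"
      using eventually_gt_at_top[of "0::real"]
    proof eventually_elim
      case (elim y)
      have e: "y powr (2*a - 1) = 1 / (y * (y powr -a * y powr -a))"
        using elim by (rule e5)
      have pos: "0 < y powr -a" using elim by simp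
      have "y powr -a \<le> uu a y" using elim by (simp add: uu_def)
      hence "y powr -a * y powr -a \<le> uu a y * uu a y"
        using pos uu_pos[OF elim, of a] by (intro mult_mono) auto
      hence "y * (y powr -a * y powr -a) \<le> y * (uu a y)^2"
        using elim by (intro mult_left_mono) (auto simp: power2_eq_square)
      hence "1 / (y * (uu a y)^2) \<le> 1 / (y * (y powr -a * y powr -a))"
        using elim pos uu_pos[OF elim, of a] by (intro divide_left_mono) (auto intro!: mult_pos_pos)
      then show ?case unfolding e .
    qed
  qed (use h in auto)
qed

lemma L6: "((\<lambda>y. 1 / (y * (uu (1/2) y)^2)) \<longlongrightarrow> 1) at_top"
  unfolding uu_def by real_asymp

lemma L7: "1/2 < a \<Longrightarrow> a < 1 \<Longrightarrow> ((\<lambda>y. 1 / (y * uu a y powr (1/a))) \<longlongrightarrow> 1) at_top"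
proof -
  assume a: "1/2 < a" "a < 1"
  have w: "((\<lambda>y::real. y powr (a - 1)) \<longlongrightarrow> 0) at_top"
    using a by (intro tendsto_neg_powr filterlim_ident) auto
  have "((\<lambda>y. 1 / ((1 + y powr (a - 1)) powr (1/a))) \<longlongrightarrow> 1 / ((1 + 0) powr (1/a))) at_top"
    by (intro tendsto_intros w) auto
  hence l: "((\<lambda>y. 1 / ((1 + y powr (a - 1)) powr (1/a))) \<longlongrightarrow> 1) at_top" by simp
  have "\<forall>\<^sub>F y in at_top. 1 / ((1 + y powr (a - 1)) powr (1/a)) = 1 / (y * uu a y powr (1/a))"
    using eventually_gt_at_top[of "0::real"]
  proof eventually_elim
    case (elim y)
    have "uu a y = y powr -a * (1 + y powr (a - 1))"
      using e7[OF elim, of a] by (simp add: uu_def distrib_left)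
    hence "uu a y powr (1/a) = (y powr -a) powr (1/a) * (1 + y powr (a - 1)) powr (1/a)"
      using elim by (simp add: powr_mult)
    also have "(y powr -a) powr (1/a) = 1 / y"
      using elim a by (simp only: powr_powr) (simp add: powr_minus_divide)
    finally show ?case using elim by simp
  qed
  then show ?thesis using l by (rule Lim_transform_eventually[rotated])
qed

lemma L8a: "1 < a \<Longrightarrow> ((\<lambda>y. 1 / (y * uu a y)) \<longlongrightarrow> 1) at_top"
proof -
  assume a: "1 < a"
  have w: "((\<lambda>y::real. y powr (1 - a)) \<longlongrightarrow> 0) at_top"
    using a by (intro tendsto_neg_powr filterlim_ident) auto
  have "((\<lambda>y. 1 / (1 + y powr (1 - a))) \<longlongrightarrow> 1 / (1 + 0)) at_top"
    by (intro tendsto_intros w) auto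
  hence l: "((\<lambda>y. 1 / (1 + y powr (1 - a))) \<longlongrightarrow> 1) at_top" by simp
  have "\<forall>\<^sub>F y in at_top. 1 / (1 + y powr (1 - a)) = 1 / (y * uu a y)"
    using eventually_gt_at_top[of "0::real"]
  proof eventually_elim
    case (elim y)
    have "y * uu a y = 1 + y powr (1 - a)"
      using elim by (simp add: uu_def distrib_left ypow)
    then show ?case by simp
  qed
  then show ?thesis using l by (rule Lim_transform_eventually[rotated])
qed

lemma L8b: "((\<lambda>y. 1 / (y * uu 1 y)) \<longlongrightarrow> 1/2) at_top"
  unfolding uu_def by real_asymp


lemma lim_le_half:
  assumes a: "0 < a" "a \<le> 1/2"
  shows "\<exists>c>0. ((\<lambda>y. (pp a y^2 + DD a y) / pp a y powr 2) \<longlongrightarrow> c) at_top"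
proof -
  have ev: "\<forall>\<^sub>F y in at_top. 1 + (DD a y * y) * (1 / (y * (uu a y)^2)) * (uu a y / pp a y)^2
      = (pp a y^2 + DD a y) / pp a y powr 2"
    using eventually_gt_at_top[of "0::real"]
  proof eventually_elim
    case (elim y)
    have "pp a y > 0" "uu a y > 0" using pp_pos[OF elim] uu_pos[OF elim] by auto
    then show ?case using elim by (simp add: field_simps power2_eq_square)
  qed
  obtain l where l: "((\<lambda>y. 1 / (y * (uu a y)^2)) \<longlongrightarrow> l) at_top" "l \<ge> 0"
  proof (cases "a < 1/2")
    case True
    have "((\<lambda>y. 1 / (y * (uu a y)^2)) \<longlongrightarrow> 0) at_top" by (rule L5[OF a(1) True])
    then show ?thesis by (rule that) simp
  next
    case False then have "a = 1/2" using a by auto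
    then have "((\<lambda>y. 1 / (y * (uu a y)^2)) \<longlongrightarrow> 1) at_top" using L6 by (simp only:)
    then show ?thesis by (rule that) simp
  qed
  have "((\<lambda>y. 1 + (DD a y * y) * (1 / (y * (uu a y)^2)) * (uu a y / pp a y)^2)
      \<longlongrightarrow> 1 + (1/3) * l * 1^2) at_top"
    by (intro tendsto_intros DD_lim up_lim l a)
  then have "((\<lambda>y. (pp a y^2 + DD a y) / pp a y powr 2) \<longlongrightarrow> 1 + (1/3) * l * 1^2) at_top"
    using ev by (rule Lim_transform_eventually)
  moreover have "1 + (1/3) * l * 1^2 > 0" using l(2) by simp
  ultimately show ?thesis by blast
qed

lemma lim_mid:
  assumes a: "1/2 < a" "a < 1"
  shows "((\<lambda>y. (pp a y^2 + DD a y) / pp a y powr (1/a)) \<longlongrightarrow> 1/3) at_top"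
proof -
  have a0: "a > 0" using a by auto
  have ev: "\<forall>\<^sub>F y in at_top. ((pp a y / uu a y)^2 * (uu a y^2 * y) + DD a y * y)
        * (1 / (y * uu a y powr (1/a))) * (1 / ((pp a y / uu a y) powr (1/a)))
      = (pp a y^2 + DD a y) / pp a y powr (1/a)"
    using eventually_gt_at_top[of "0::real"]
  proof eventually_elim
    case (elim y)
    have p: "pp a y > 0" and u: "uu a y > 0" using pp_pos[OF elim] uu_pos[OF elim] by auto
    have "pp a y powr (1/a) = (uu a y * (pp a y / uu a y)) powr (1/a)" using u by simp
    also have "\<dots> = uu a y powr (1/a) * (pp a y / uu a y) powr (1/a)"
      by (rule powr_mult)
    finally have e: "pp a y powr (1/a) = uu a y powr (1/a) * (pp a y / uu a y) powr (1/a)" .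
    have "uu a y powr (1/a) > 0" "(pp a y / uu a y) powr (1/a) > 0" using p u by auto
    then show ?case unfolding e using elim p u by (simp add: field_simps power2_eq_square)
  qed
  have "((\<lambda>y. ((pp a y / uu a y)^2 * (uu a y^2 * y) + DD a y * y)
        * (1 / (y * uu a y powr (1/a))) * (1 / ((pp a y / uu a y) powr (1/a))))
      \<longlongrightarrow> (1^2 * 0 + 1/3) * 1 * (1 / (1 powr (1/a)))) at_top"
    by (intro tendsto_intros DD_lim pu_lim L4 L7 a a0) auto
  then show ?thesis using ev by (auto intro: Lim_transform_eventually)
qed

lemma lim_ge1:
  assumes a: "1 \<le> a"
  shows "\<exists>c>0. ((\<lambda>y. (pp a y^2 + DD a y) / pp a y powr 1) \<longlongrightarrow> c) at_top"
proof -
  have a0: "a > 0" using a by auto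
  have ev: "\<forall>\<^sub>F y in at_top. ((pp a y / uu a y)^2 * (uu a y^2 * y) + DD a y * y)
        * (1 / (y * uu a y)) * (uu a y / pp a y)
      = (pp a y^2 + DD a y) / pp a y powr 1"
    using eventually_gt_at_top[of "0::real"]
  proof eventually_elim
    case (elim y)
    have p: "pp a y > 0" and u: "uu a y > 0" using pp_pos[OF elim] uu_pos[OF elim] by auto
    then show ?case using elim p u by (simp add: field_simps power2_eq_square)
  qed
  obtain l where l: "((\<lambda>y. 1 / (y * uu a y)) \<longlongrightarrow> l) at_top" "l > 0"
  proof (cases "a = 1")
    case True then have "((\<lambda>y. 1 / (y * uu a y)) \<longlongrightarrow> 1/2) at_top" using L8b by simp
    then show ?thesis by (rule that) simp
  next
    case False then have "a > 1" using a by auto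
    then show ?thesis by (rule that[OF L8a]) simp
  qed
  have a12: "a > 1/2" using a by auto
  have "((\<lambda>y. ((pp a y / uu a y)^2 * (uu a y^2 * y) + DD a y * y)
        * (1 / (y * uu a y)) * (uu a y / pp a y))
      \<longlongrightarrow> (1^2 * 0 + 1/3) * l * 1) at_top"
    by (intro tendsto_intros DD_lim pu_lim up_lim L4 l a12 a0)
  then have "((\<lambda>y. (pp a y^2 + DD a y) / pp a y powr 1) \<longlongrightarrow> (1^2 * 0 + 1/3) * l * 1) at_top"
    using ev by (rule Lim_transform_eventually)
  moreover have "(1^2 * 0 + 1/3) * l * 1 > 0" using l(2) by simp
  ultimately show ?thesis by blast
qed

lemma lim_r1:
  assumes "0 < a"
  shows "\<exists>c>0. ((\<lambda>y. (pp a y^2 + DD a y) / pp a y powr (1 / (if a < 1 then max (1/2) a else 1))) \<longlongrightarrow> c) at_top"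
proof (cases "a \<le> 1/2")
  case True
  then have "1 / (if a < 1 then max (1/2) a else 1) = 2" by (auto simp: max_def field_simps)
  then show ?thesis using lim_le_half[OF assms True] by simp
next
  case False
  show ?thesis
  proof (cases "a < 1")
    case True
    then have "1 / (if a < 1 then max (1/2) a else 1) = 1/a" using False by (simp add: max_def)
    then show ?thesis using lim_mid[of a] True False by (auto intro!: exI[of _ "1/3"])
  next
    case F2: False
    then show ?thesis using lim_ge1[of a] by simp
  qed
qed

lemma lim_r2:
  "((\<lambda>y. pp a y^2 / pp a y powr (1 / (1/2))) \<longlongrightarrow> 1) at_top"
proof -
  have "\<forall>\<^sub>F y in at_top. 1 = pp a y^2 / pp a y powr (1 / (1/2))"
    using eventually_gt_at_top[of "0::real"]
  proof eventually_elim
    case (elim y)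
    then show ?case using pp_pos[OF elim, of a] by simp
  qed
  then show ?thesis by (rule Lim_transform_eventually[rotated]) simp
qed



lemma indep_inter:
  assumes P: "prob_space M" and ind: "prob_space.indep_vars M (\<lambda>_. borel) F I"
    and J: "J \<subseteq> I" "finite J" "J \<noteq> {}" and S: "\<And>j. j \<in> J \<Longrightarrow> S j \<in> sets borel"
  shows "measure M (\<Inter>j\<in>J. F j -` S j \<inter> space M) = (\<Prod>j\<in>J. measure M (F j -` S j \<inter> space M))"
proof -
  interpret prob_space M by (rule P)
  have "indep_sets (\<lambda>i. {F i -` A \<inter> space M | A. A \<in> sets borel}) I"
    using ind unfolding indep_vars_def2 by simp
  then show ?thesis by (rule indep_setsD) (use J S in auto)
qed

lemma indep3:
  assumes P: "prob_space M" and ind: "prob_space.indep_vars M (\<lambda>_. borel) F I"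
    and i: "i1 \<in> I" "i2 \<in> I" "i3 \<in> I" "i1 \<noteq> i2" "i1 \<noteq> i3" "i2 \<noteq> i3"
    and S: "S1 \<in> sets borel" "S2 \<in> sets borel" "S3 \<in> sets borel"
  shows "measure M ((F i1 -` S1 \<inter> space M) \<inter> (F i2 -` S2 \<inter> space M) \<inter> (F i3 -` S3 \<inter> space M))
    = measure M (F i1 -` S1 \<inter> space M) * measure M (F i2 -` S2 \<inter> space M) * measure M (F i3 -` S3 \<inter> space M)"
proof -
  let ?S = "\<lambda>j. if j = i1 then S1 else if j = i2 then S2 else S3"
  have "measure M (\<Inter>j\<in>{i1,i2,i3}. F j -` ?S j \<inter> space M)
    = (\<Prod>j\<in>{i1,i2,i3}. measure M (F j -` ?S j \<inter> space M))"
    by (rule indep_inter[OF P ind]) (use i S in auto)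
  moreover have "(\<Inter>j\<in>{i1,i2,i3}. F j -` ?S j \<inter> space M) = (F i1 -` S1 \<inter> space M) \<inter> (F i2 -` S2 \<inter> space M) \<inter> (F i3 -` S3 \<inter> space M)"
    using i by auto
  moreover have "(\<Prod>j\<in>{i1,i2,i3}. measure M (F j -` ?S j \<inter> space M)) = measure M (F i1 -` S1 \<inter> space M) * measure M (F i2 -` S2 \<inter> space M) * measure M (F i3 -` S3 \<inter> space M)"
    using i by simp
  ultimately show ?thesis by simp
qed

lemma indep5:
  assumes P: "prob_space M" and ind: "prob_space.indep_vars M (\<lambda>_. borel) F I"
    and i: "i1 \<in> I" "i2 \<in> I" "i3 \<in> I" "i4 \<in> I" "i5 \<in> I"
    and d: "i1 \<noteq> i2" "i1 \<noteq> i3" "i1 \<noteq> i4" "i1 \<noteq> i5" "i2 \<noteq> i3" "i2 \<noteq> i4" "i2 \<noteq> i5"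
      "i3 \<noteq> i4" "i3 \<noteq> i5" "i4 \<noteq> i5"
    and S: "S1 \<in> sets borel" "S2 \<in> sets borel" "S3 \<in> sets borel" "S4 \<in> sets borel" "S5 \<in> sets borel"
  shows "measure M ((F i1 -` S1 \<inter> space M) \<inter> (F i2 -` S2 \<inter> space M) \<inter> (F i3 -` S3 \<inter> space M)
       \<inter> (F i4 -` S4 \<inter> space M) \<inter> (F i5 -` S5 \<inter> space M))
    = measure M (F i1 -` S1 \<inter> space M) * measure M (F i2 -` S2 \<inter> space M) * measure M (F i3 -` S3 \<inter> space M)
      * measure M (F i4 -` S4 \<inter> space M) * measure M (F i5 -` S5 \<inter> space M)"
proof -
  let ?S = "\<lambda>j. if j = i1 then S1 else if j = i2 then S2 else if j = i3 then S3 else if j = i4 then S4 else S5"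
  have d': "i2 \<noteq> i1" "i3 \<noteq> i1" "i4 \<noteq> i1" "i5 \<noteq> i1" "i3 \<noteq> i2" "i4 \<noteq> i2" "i5 \<noteq> i2"
      "i4 \<noteq> i3" "i5 \<noteq> i3" "i5 \<noteq> i4" using d by auto
  have "measure M (\<Inter>j\<in>{i1,i2,i3,i4,i5}. F j -` ?S j \<inter> space M)
    = (\<Prod>j\<in>{i1,i2,i3,i4,i5}. measure M (F j -` ?S j \<inter> space M))"
    by (rule indep_inter[OF P ind]) (use i S in auto)
  moreover have "(\<Inter>j\<in>{i1,i2,i3,i4,i5}. F j -` ?S j \<inter> space M) = (F i1 -` S1 \<inter> space M) \<inter> (F i2 -` S2 \<inter> space M) \<inter> (F i3 -` S3 \<inter> space M)
       \<inter> (F i4 -` S4 \<inter> space M) \<inter> (F i5 -` S5 \<inter> space M)"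
    by (simp only: INT_insert INT_empty d d' if_True if_False refl) blast
  moreover have "(\<Prod>j\<in>{i1,i2,i3,i4,i5}. measure M (F j -` ?S j \<inter> space M)) = measure M (F i1 -` S1 \<inter> space M) * measure M (F i2 -` S2 \<inter> space M) * measure M (F i3 -` S3 \<inter> space M)
      * measure M (F i4 -` S4 \<inter> space M) * measure M (F i5 -` S5 \<inter> space M)"
    using d d' by (simp add: mult.assoc)
  ultimately show ?thesis by simp
qed

lemma indep6:
  assumes P: "prob_space M" and ind: "prob_space.indep_vars M (\<lambda>_. borel) F I"
    and i: "i1 \<in> I" "i2 \<in> I" "i3 \<in> I" "i4 \<in> I" "i5 \<in> I" "i6 \<in> I"
    and d: "i1 \<noteq> i2" "i1 \<noteq> i3" "i1 \<noteq> i4" "i1 \<noteq> i5" "i1 \<noteq> i6" "i2 \<noteq> i3" "i2 \<noteq> i4" "i2 \<noteq> i5" "i2 \<noteq> i6"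
      "i3 \<noteq> i4" "i3 \<noteq> i5" "i3 \<noteq> i6" "i4 \<noteq> i5" "i4 \<noteq> i6" "i5 \<noteq> i6"
    and S: "S1 \<in> sets borel" "S2 \<in> sets borel" "S3 \<in> sets borel" "S4 \<in> sets borel" "S5 \<in> sets borel" "S6 \<in> sets borel"
  shows "measure M ((F i1 -` S1 \<inter> space M) \<inter> (F i2 -` S2 \<inter> space M) \<inter> (F i3 -` S3 \<inter> space M)
       \<inter> (F i4 -` S4 \<inter> space M) \<inter> (F i5 -` S5 \<inter> space M) \<inter> (F i6 -` S6 \<inter> space M))
    = measure M (F i1 -` S1 \<inter> space M) * measure M (F i2 -` S2 \<inter> space M) * measure M (F i3 -` S3 \<inter> space M)
      * measure M (F i4 -` S4 \<inter> space M) * measure M (F i5 -` S5 \<inter> space M) * measure M (F i6 -` S6 \<inter> space M)"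
proof -
  let ?S = "\<lambda>j. if j = i1 then S1 else if j = i2 then S2 else if j = i3 then S3 else if j = i4 then S4 else if j = i5 then S5 else S6"
  have d': "i2 \<noteq> i1" "i3 \<noteq> i1" "i4 \<noteq> i1" "i5 \<noteq> i1" "i6 \<noteq> i1" "i3 \<noteq> i2" "i4 \<noteq> i2" "i5 \<noteq> i2" "i6 \<noteq> i2"
      "i4 \<noteq> i3" "i5 \<noteq> i3" "i6 \<noteq> i3" "i5 \<noteq> i4" "i6 \<noteq> i4" "i6 \<noteq> i5" using d by auto
  have "measure M (\<Inter>j\<in>{i1,i2,i3,i4,i5,i6}. F j -` ?S j \<inter> space M)
    = (\<Prod>j\<in>{i1,i2,i3,i4,i5,i6}. measure M (F j -` ?S j \<inter> space M))"
    by (rule indep_inter[OF P ind]) (use i S in auto)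
  moreover have "(\<Inter>j\<in>{i1,i2,i3,i4,i5,i6}. F j -` ?S j \<inter> space M) = (F i1 -` S1 \<inter> space M) \<inter> (F i2 -` S2 \<inter> space M) \<inter> (F i3 -` S3 \<inter> space M)
       \<inter> (F i4 -` S4 \<inter> space M) \<inter> (F i5 -` S5 \<inter> space M) \<inter> (F i6 -` S6 \<inter> space M)"
    by (simp only: INT_insert INT_empty d d' if_True if_False refl) blast
  moreover have "(\<Prod>j\<in>{i1,i2,i3,i4,i5,i6}. measure M (F j -` ?S j \<inter> space M)) = measure M (F i1 -` S1 \<inter> space M) * measure M (F i2 -` S2 \<inter> space M) * measure M (F i3 -` S3 \<inter> space M)
      * measure M (F i4 -` S4 \<inter> space M) * measure M (F i5 -` S5 \<inter> space M) * measure M (F i6 -` S6 \<inter> space M)"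
    using d d' by (simp add: mult.assoc)
  ultimately show ?thesis by simp
qed
lemma powr_set_borel: "{t::real. t powr c \<le> y} \<in> sets borel"
proof -
  have m: "(\<lambda>t::real. t powr c) \<in> borel_measurable borel"
    by (intro powr_real_measurable) auto
  have "{t::real. t powr c \<le> y} = (\<lambda>t. t powr c) -` {..y} \<inter> space borel" by auto
  also have "\<dots> \<in> sets borel" by (rule measurable_sets[OF m]) simp
  finally show ?thesis .
qed


lemma atMost_borel': "{..c::real} \<in> sets borel" by simp

lemma frechet_le:
  assumes "std_frechet M X" "c > 0"
  shows "measure M (X -` {..c} \<inter> space M) = exp (-1/c)"
proof -
  have "X -` {..c} \<inter> space M = {\<omega> \<in> space M. X \<omega> \<le> c}" by auto
  then show ?thesis using assms unfolding std_frechet_def by simp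
qed

lemma frechet_pow:
  assumes P: "prob_space M" and X: "std_frechet M X" and a: "a > 0" and y: "y > 0"
  shows "measure M (X -` {t. t powr (1/a) \<le> y} \<inter> space M) = exp (-1/(y powr a))"
proof -
  interpret prob_space M by (rule P)
  have Xm: "X \<in> borel_measurable M" using X unfolding std_frechet_def by simp
  define E where "E = X -` {t. t powr (1/a) \<le> y} \<inter> space M"
  define B where "B = X -` {..y powr a} \<inter> space M"
  define N where "N = X -` {..0} \<inter> space M"
  have E: "E \<in> events" unfolding E_def by (rule measurable_sets[OF Xm powr_set_borel])
  have B: "B \<in> events" unfolding B_def by (rule measurable_sets[OF Xm]) simp
  have N: "N \<in> events" unfolding N_def by (rule measurable_sets[OF Xm]) simp
  have ya: "y powr a > 0" using y by simp
  have mB: "measure M B = exp (-1/(y powr a))" unfolding B_def by (rule frechet_le[OF X ya])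
  have bound: "measure M N \<le> exp (-1/\<epsilon>)" if e: "\<epsilon> > 0" for \<epsilon>
  proof -
    have "measure M N \<le> measure M (X -` {..\<epsilon>} \<inter> space M)"
      by (rule finite_measure_mono) (use e in \<open>auto simp: N_def intro: measurable_sets[OF Xm]\<close>)
    also have "\<dots> = exp (-1/\<epsilon>)" by (rule frechet_le[OF X e])
    finally show ?thesis .
  qed
  have lim: "((\<lambda>\<epsilon>::real. exp (-1/\<epsilon>)) \<longlongrightarrow> 0) (at_right 0)" by real_asymp
  have "measure M N \<le> 0"
    by (rule tendsto_lowerbound[OF lim])
       (use eventually_at_right_less[of "0::real"] bound in \<open>auto elim!: eventually_mono\<close>)
  then have mN: "measure M N = 0" by (simp add: measure_nonneg antisym)
  have EB: "E \<subseteq> B"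
  proof
    fix \<omega> assume "\<omega> \<in> E"
    then have w: "\<omega> \<in> space M" "X \<omega> powr (1/a) \<le> y" by (auto simp: E_def)
    show "\<omega> \<in> B"
    proof (cases "X \<omega> > 0")
      case True
      have "X \<omega> = (X \<omega> powr (1/a)) powr a" using True a by (simp add: powr_powr)
      also have "\<dots> \<le> y powr a" using w a by (intro powr_mono2) auto
      finally show ?thesis using w by (simp add: B_def)
    next
      case False then have "X \<omega> \<le> y powr a" using ya by linarith
      then show ?thesis using w by (simp add: B_def)
    qed
  qed
  have BNE: "B - N \<subseteq> E"
  proof
    fix \<omega> assume "\<omega> \<in> B - N"
    then have w: "\<omega> \<in> space M" "X \<omega> \<le> y powr a" "X \<omega> > 0" by (auto simp: B_def N_def)
    have "X \<omega> powr (1/a) \<le> (y powr a) powr (1/a)" using w a by (intro powr_mono2) auto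
    also have "\<dots> = y" using y a by (simp add: powr_powr)
    finally show "\<omega> \<in> E" using w by (simp add: E_def)
  qed
  have NB: "N \<subseteq> B"
  proof
    fix w assume "w \<in> N"
    hence w: "X w \<le> 0" "w \<in> space M" by (auto simp: N_def)
    hence "X w \<le> y powr a" using ya by linarith
    thus "w \<in> B" using w by (simp add: B_def)
  qed
  have "measure M E \<le> measure M B" by (rule finite_measure_mono[OF EB B])
  moreover have "measure M (B - N) \<le> measure M E" by (rule finite_measure_mono[OF BNE E])
  moreover have "measure M (B - N) = measure M B - measure M N" by (rule finite_measure_Diff[OF B N NB])
  ultimately show ?thesis using mB mN by (simp add: E_def)
qed



lemma sv_of_lim:
  assumes "(L \<longlongrightarrow> c) at_top" "c \<noteq> 0"
  shows "slowly_varying L"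
  unfolding slowly_varying_def
proof (intro allI impI)
  fix t :: real assume t: "t > 0"
  have "filterlim (\<lambda>y. t * y) at_top at_top"
    by (rule filterlim_tendsto_pos_mult_at_top[OF tendsto_const t filterlim_ident])
  then have "((\<lambda>y. L (t * y)) \<longlongrightarrow> c) at_top"
    using assms(1) by (rule filterlim_compose[rotated])
  then have "((\<lambda>y. L (t * y) / L y) \<longlongrightarrow> c / c) at_top"
    using assms by (intro tendsto_divide) auto
  then show "((\<lambda>y. L (t * y) / L y) \<longlongrightarrow> 1) at_top" using assms(2) by simp
qed

lemma final_step:
  fixes P1 P12 g :: "real \<Rightarrow> real" and \<eta> c a :: real
  assumes "eventually (\<lambda>y. P1 y = pp a y) at_top" "eventually (\<lambda>y. P12 y = g y) at_top"
    "((\<lambda>y. g y / pp a y powr (1/\<eta>)) \<longlongrightarrow> c) at_top" "c > 0"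
  shows "\<exists>L. slowly_varying L \<and> P12 \<sim>[at_top] (\<lambda>y. P1 y powr (1/\<eta>) * L y)"
proof (intro exI conjI)
  let ?L = "\<lambda>y. P12 y / P1 y powr (1/\<eta>)"
  have ev: "eventually (\<lambda>y. g y / pp a y powr (1/\<eta>) = ?L y) at_top"
    using assms(1,2) by eventually_elim simp
  have "(?L \<longlongrightarrow> c) at_top" by (rule Lim_transform_eventually[OF assms(3) ev])
  then show "slowly_varying ?L" using assms(4) by (intro sv_of_lim) auto
  show "P12 \<sim>[at_top] (\<lambda>y. P1 y powr (1/\<eta>) * ?L y)"
  proof (rule asymp_equiv_refl_ev)
    show "eventually (\<lambda>y. P12 y = P1 y powr (1/\<eta>) * ?L y) at_top"
      using assms(1) eventually_gt_at_top[of "0::real"]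
    proof eventually_elim
      case (elim y)
      then have "P1 y > 0" using pp_pos[of y a] by simp
      then show ?case by simp
    qed
  qed
qed

lemma exp3: "y > 0 \<Longrightarrow> exp (-1/(3*y)) * exp (-1/(3*y/2)) * exp (-1/(y powr a)) = exp (- uu a y)"
proof -
  assume y: "y > 0"
  have "- uu a y = -1/(3*y) + -1/(3*y/2) + -1/(y powr a)"
    using y by (simp add: uu_def powr_minus_divide field_simps)
  then show ?thesis by (simp only: exp_add)
qed

lemma exp5: "y > 0 \<Longrightarrow> exp (-1/(3*y)) * exp (-1/(3*y/2)) * exp (-1/(3*y/2)) * exp (-1/(y powr a)) * exp (-1/(y powr a))
   = exp (-2 * uu a y) * exp (1/(3*y))"
proof -
  assume y: "y > 0"
  have "-2 * uu a y + 1/(3*y) = -1/(3*y) + -1/(3*y/2) + -1/(3*y/2) + -1/(y powr a) + -1/(y powr a)"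
    using y by (simp add: uu_def powr_minus_divide field_simps)
  then have "exp (-2 * uu a y + 1/(3*y)) = exp (-1/(3*y) + -1/(3*y/2) + -1/(3*y/2) + -1/(y powr a) + -1/(y powr a))"
    by simp
  then show ?thesis by (simp only: exp_add)
qed



theorem mainTheorem4:
  fixes M :: "'a measure"
    and Xh :: "nat \<Rightarrow> real^2 \<Rightarrow> 'a \<Rightarrow> real"
    and Z :: "nat \<Rightarrow> 'a \<Rightarrow> real"
    and \<alpha> :: "real^2 \<Rightarrow> real"
    and x :: "real^2" and n r :: nat
  assumes "prob_space M"
    and "prob_space.indep_vars M (\<lambda>_. borel) (joint_family Xh Z) (range Inl \<union> Inr ` {1..})"
    and "\<And>k y. std_frechet M (Xh k y)"
    and "\<And>k. k \<ge> 1 \<Longrightarrow> std_frechet M (Z k)"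
    and "\<And>y. \<alpha> y > 0"
    and "n \<ge> 1" and "r \<ge> 1"
  shows "residual_tdc M (Yfield Xh Z \<alpha> n x) (Yfield Xh Z \<alpha> (n + r) x)
     (if \<alpha> x < 1 \<and> r = 1 then max (1/2) (\<alpha> x)
      else if \<alpha> x \<ge> 1 \<and> r = 1 then 1 else 1/2)"
proof -
  interpret P: prob_space M by (rule assms(1))
  define a where "a = \<alpha> x"
  have a: "a > 0" using assms(5) by (simp add: a_def)
  define F where "F = joint_family Xh Z"
  define J :: "((nat \<times> (real^2)) + nat) set" where "J = range Inl \<union> Inr ` {1::nat..}"
  have ind: "P.indep_vars (\<lambda>_. borel) F J" using assms(2) by (simp add: F_def J_def)
  have FL: "\<And>k. F (Inl (k, x)) = Xh k x" and FR: "\<And>k. F (Inr k) = Z k"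
    by (simp_all add: F_def joint_family_def)
  have Xm: "\<And>k. Xh k x \<in> borel_measurable M" using assms(3) by (simp add: std_frechet_def)
  have Zm: "\<And>k. k \<ge> 1 \<Longrightarrow> Z k \<in> borel_measurable M" using assms(4) by (simp add: std_frechet_def)
  define Ev where "Ev m y = {\<omega> \<in> space M. Yfield Xh Z \<alpha> m x \<omega> \<le> y}" for m y
  have Ev_eq: "Ev m y = (Xh (m-1) x -` {..3*y} \<inter> space M) \<inter> (Xh m x -` {..3*y/2} \<inter> space M)
      \<inter> (Z m -` {t. t powr (1/a) \<le> y} \<inter> space M)" for m y
    by (auto simp: Ev_def Yfield_def Xfield_def a_def)
  have Ev_sets: "Ev m y \<in> P.events" if "m \<ge> 1" for m y
    unfolding Ev_eq
    by (intro sets.Int measurable_sets[OF Xm] measurable_sets[OF Zm[OF that]] powr_set_borel) simp_all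
  have marg: "measure M (Ev m y) = exp (- uu a y)" if m: "m \<ge> 1" and y: "y > 0" for m y
  proof -
    have "measure M (Ev m y) = measure M (Xh (m-1) x -` {..3*y} \<inter> space M) * measure M (Xh m x -` {..3*y/2} \<inter> space M)
      * measure M (Z m -` {t. t powr (1/a) \<le> y} \<inter> space M)"
      unfolding Ev_eq
      using indep3[OF assms(1) ind, of "Inl (m-1, x)" "Inl (m, x)" "Inr m" "{..3*y}" "{..3*y/2}" "{t. t powr (1/a) \<le> y}"]
        m by (simp add: FL FR J_def powr_set_borel)
    also have "\<dots> = exp (-1/(3*y)) * exp (-1/(3*y/2)) * exp (-1/(y powr a))"
      using y frechet_le[OF assms(3)] frechet_pow[OF assms(1) assms(4)[OF m] a y] by simp
    also have "\<dots> = exp (- uu a y)" by (rule exp3[OF y])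
    finally show ?thesis .
  qed
  have tail: "measure M {\<omega> \<in> space M. Yfield Xh Z \<alpha> m x \<omega> > y} = pp a y" if m: "m \<ge> 1" and y: "y > 0" for m y
  proof -
    have "{\<omega> \<in> space M. Yfield Xh Z \<alpha> m x \<omega> > y} = space M - Ev m y" by (auto simp: Ev_def)
    then show ?thesis using P.prob_compl[OF Ev_sets[OF m]] marg[OF m y] by (simp add: pp_def)
  qed
  have joint: "measure M {\<omega> \<in> space M. Yfield Xh Z \<alpha> (n+r) x \<omega> > y \<and> Yfield Xh Z \<alpha> n x \<omega> > y}
      = 1 - 2 * exp (- uu a y) + measure M (Ev n y \<inter> Ev (n+r) y)" if y: "y > 0" for y
  proof -
    have n1: "n + r \<ge> 1" using assms(6) by simp
    have "{\<omega> \<in> space M. Yfield Xh Z \<alpha> (n+r) x \<omega> > y \<and> Yfield Xh Z \<alpha> n x \<omega> > y} = space M - (Ev n y \<union> Ev (n+r) y)"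
      by (auto simp: Ev_def)
    moreover have "measure M (space M - (Ev n y \<union> Ev (n+r) y)) = 1 - measure M (Ev n y \<union> Ev (n+r) y)"
      by (rule P.prob_compl) (intro sets.Un Ev_sets assms(6) n1)
    moreover have "measure M (Ev n y \<union> Ev (n+r) y) = measure M (Ev n y) + measure M (Ev (n+r) y) - measure M (Ev (n+r) y \<inter> Ev n y)"
      using P.finite_measure_Union'[OF Ev_sets[OF assms(6)] Ev_sets[OF n1]]
        P.finite_measure_Diff'[OF Ev_sets[OF n1] Ev_sets[OF assms(6)]] by simp
    ultimately show ?thesis using marg[OF assms(6) y] marg[OF n1 y] by (simp add: Int_commute)
  qed
  have eta_pos: "0 < (if a < 1 \<and> r = 1 then max (1/2) a else if a \<ge> 1 \<and> r = 1 then 1 else 1/2 :: real)"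
    and eta_le: "(if a < 1 \<and> r = 1 then max (1/2) a else if a \<ge> 1 \<and> r = 1 then 1 else 1/2 :: real) \<le> 1"
    by auto
  show ?thesis
  proof (cases "r = 1")
    case True
    have J1: "measure M (Ev n y \<inter> Ev (n+r) y) = exp (-2 * uu a y) * exp (1/(3*y))" if y: "y > 0" for y
    proof -
      have "Ev n y \<inter> Ev (n+r) y = (Xh (n-1) x -` {..3*y} \<inter> space M) \<inter> (Xh n x -` {..3*y/2} \<inter> space M)
         \<inter> (Xh (n+1) x -` {..3*y/2} \<inter> space M) \<inter> (Z n -` {t. t powr (1/a) \<le> y} \<inter> space M)
         \<inter> (Z (n+1) -` {t. t powr (1/a) \<le> y} \<inter> space M)"
        unfolding Ev_eq True using y by auto
      then have "measure M (Ev n y \<inter> Ev (n+r) y) = measure M (Xh (n-1) x -` {..3*y} \<inter> space M)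
          * measure M (Xh n x -` {..3*y/2} \<inter> space M) * measure M (Xh (n+1) x -` {..3*y/2} \<inter> space M)
          * measure M (Z n -` {t. t powr (1/a) \<le> y} \<inter> space M) * measure M (Z (n+1) -` {t. t powr (1/a) \<le> y} \<inter> space M)"
        using indep5[OF assms(1) ind, of "Inl (n-1, x)" "Inl (n, x)" "Inl (n+1, x)" "Inr n" "Inr (n+1)"
            "{..3*y}" "{..3*y/2}" "{..3*y/2}" "{t. t powr (1/a) \<le> y}" "{t. t powr (1/a) \<le> y}"]
          assms(6) by (simp add: FL FR J_def powr_set_borel)
      also have "\<dots> = exp (-1/(3*y)) * exp (-1/(3*y/2)) * exp (-1/(3*y/2)) * exp (-1/(y powr a)) * exp (-1/(y powr a))"
        using y frechet_le[OF assms(3)] frechet_pow[OF assms(1) assms(4) a y] assms(6) by simp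
      also have "\<dots> = exp (-2 * uu a y) * exp (1/(3*y))" by (rule exp5[OF y])
      finally show ?thesis .
    qed
    have g: "1 - 2 * exp (- uu a y) + exp (-2 * uu a y) * exp (1/(3*y)) = pp a y^2 + DD a y" for y
    proof -
      have "exp (-2 * uu a y) = exp (- uu a y) * exp (- uu a y)" by (simp add: exp_add[symmetric])
      then show ?thesis by (simp add: pp_def DD_def power2_eq_square algebra_simps)
    qed
    obtain c where c: "c > 0" "((\<lambda>y. (pp a y^2 + DD a y) / pp a y powr (1 / (if a < 1 then max (1/2) a else 1))) \<longlongrightarrow> c) at_top"
      using lim_r1[OF a] by blast
    have eta: "(if a < 1 \<and> r = 1 then max (1/2) a else if a \<ge> 1 \<and> r = 1 then 1 else 1/2) = (if a < 1 then max (1/2) a else 1)"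
      using True by auto
    have "\<exists>L. slowly_varying L \<and> (\<lambda>y. measure M {\<omega> \<in> space M. Yfield Xh Z \<alpha> (n+r) x \<omega> > y \<and> Yfield Xh Z \<alpha> n x \<omega> > y})
        \<sim>[at_top] (\<lambda>y. measure M {\<omega> \<in> space M. Yfield Xh Z \<alpha> n x \<omega> > y} powr (1 / (if a < 1 then max (1/2) a else 1)) * L y)"
    proof (rule final_step[OF _ _ c(2) c(1)])
      show "\<forall>\<^sub>F y in at_top. measure M {\<omega> \<in> space M. Yfield Xh Z \<alpha> n x \<omega> > y} = pp a y"
        using eventually_gt_at_top[of "0::real"] by eventually_elim (rule tail[OF assms(6)])
      show "\<forall>\<^sub>F y in at_top. measure M {\<omega> \<in> space M. Yfield Xh Z \<alpha> (n+r) x \<omega> > y \<and> Yfield Xh Z \<alpha> n x \<omega> > y}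
          = pp a y^2 + DD a y"
        using eventually_gt_at_top[of "0::real"] by eventually_elim (simp only: joint J1 g)
    qed
    then show ?thesis using eta_pos eta_le unfolding residual_tdc_def eta[folded a_def] a_def[symmetric] by simp
  next
    case False
    then have r2: "r \<ge> 2" using assms(7) by simp
    have J2: "measure M (Ev n y \<inter> Ev (n+r) y) = exp (- uu a y) * exp (- uu a y)" if y: "y > 0" for y
    proof -
      have "Ev n y \<inter> Ev (n+r) y = (Xh (n-1) x -` {..3*y} \<inter> space M) \<inter> (Xh n x -` {..3*y/2} \<inter> space M)
         \<inter> (Z n -` {t. t powr (1/a) \<le> y} \<inter> space M) \<inter> (Xh (n+r-1) x -` {..3*y} \<inter> space M)
         \<inter> (Xh (n+r) x -` {..3*y/2} \<inter> space M) \<inter> (Z (n+r) -` {t. t powr (1/a) \<le> y} \<inter> space M)"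
        unfolding Ev_eq by auto
      then have "measure M (Ev n y \<inter> Ev (n+r) y) = measure M (Xh (n-1) x -` {..3*y} \<inter> space M)
          * measure M (Xh n x -` {..3*y/2} \<inter> space M) * measure M (Z n -` {t. t powr (1/a) \<le> y} \<inter> space M)
          * measure M (Xh (n+r-1) x -` {..3*y} \<inter> space M)
          * measure M (Xh (n+r) x -` {..3*y/2} \<inter> space M) * measure M (Z (n+r) -` {t. t powr (1/a) \<le> y} \<inter> space M)"
        using indep6[OF assms(1) ind, of "Inl (n-1, x)" "Inl (n, x)" "Inr n" "Inl (n+r-1, x)" "Inl (n+r, x)" "Inr (n+r)"
            "{..3*y}" "{..3*y/2}" "{t. t powr (1/a) \<le> y}" "{..3*y}" "{..3*y/2}" "{t. t powr (1/a) \<le> y}"]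
          assms(6) r2 by (simp add: FL FR J_def powr_set_borel)
      also have "\<dots> = (exp (-1/(3*y)) * exp (-1/(3*y/2)) * exp (-1/(y powr a))) * (exp (-1/(3*y)) * exp (-1/(3*y/2)) * exp (-1/(y powr a)))"
        using y frechet_le[OF assms(3)] frechet_pow[OF assms(1) assms(4) a y] assms(6) by simp
      also have "\<dots> = exp (- uu a y) * exp (- uu a y)" by (simp only: exp3[OF y])
      finally show ?thesis .
    qed
    have g: "1 - 2 * exp (- uu a y) + exp (- uu a y) * exp (- uu a y) = pp a y^2" for y
      by (simp add: pp_def power2_eq_square algebra_simps)
    have eta: "(if a < 1 \<and> r = 1 then max (1/2) a else if a \<ge> 1 \<and> r = 1 then 1 else 1/2) = (1/2::real)"
      using False by auto
    have "\<exists>L. slowly_varying L \<and> (\<lambda>y. measure M {\<omega> \<in> space M. Yfield Xh Z \<alpha> (n+r) x \<omega> > y \<and> Yfield Xh Z \<alpha> n x \<omega> > y})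
        \<sim>[at_top] (\<lambda>y. measure M {\<omega> \<in> space M. Yfield Xh Z \<alpha> n x \<omega> > y} powr (1 / (1/2)) * L y)"
    proof (rule final_step[OF _ _ lim_r2[of a]])
      show "\<forall>\<^sub>F y in at_top. measure M {\<omega> \<in> space M. Yfield Xh Z \<alpha> n x \<omega> > y} = pp a y"
        using eventually_gt_at_top[of "0::real"] by eventually_elim (rule tail[OF assms(6)])
      show "\<forall>\<^sub>F y in at_top. measure M {\<omega> \<in> space M. Yfield Xh Z \<alpha> (n+r) x \<omega> > y \<and> Yfield Xh Z \<alpha> n x \<omega> > y}
          = pp a y^2"
        using eventually_gt_at_top[of "0::real"] by eventually_elim (simp add: joint J2 g)
    qed simp
    then show ?thesis using eta_pos eta_le unfolding residual_tdc_def eta[folded a_def] a_def[symmetric] by simp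
  qed
qed


end
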